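(* Let $w\in\mathbb{R}^n$, $w\ge0$. The set of all bilevel feasible decompositions of $w$ is convex.
   Context: Multi-commodity network pricing setting: $G=(\mathcal{V},\mathcal{A})$ directed graph with arc costs $c\ge0$, nonempty tolled arc set $\mathcal{A}_1\subsetneq\mathcal{A}$, $n=|\mathcal{A}_1|$, $N$ node–arc incidence matrix; finite set $\mathcal{K}$ of commodities, commodity $k$ having origin $o^k$ and destination $d^k$ connected by a path of arcs not in $\mathcal{A}_1$; $b^k_{o^k}=1$, $b^k_{d^k}=-1$, other entries $0$; $\mathcal{X}^k=\{x\in\mathbb{R}^{\mathcal{A}}: Nx=b^k,\ x\ge0\}$; $x_{\mathcal{A}_1}$ is the restriction of $x$ to $\mathcal{A}_1$. For $t\in\mathbb{R}^n$ let $f^k(t)=\min\{c^\top x+t^\top x_{\mathcal{A}_1}: x\in\mathcal{X}^k\}$ if $t\ge0$, $-\infty$ otherwise; $f=\sum_k f^k$; $g^k(w)=\sup_t\{f^k(t)-t^\top w\}$, $g(w)=\sup_t\{f(t)-t^\top w\}$. A decomposition of $w$ is a tuple $(w^k)_{k\in\mathcal{K}}$ of vectors $w^k\in\mathbb{R}^n$, $w^k\ge0$, with $\sum_{k}w^k=w$; it is bilevel feasible if $g(w)=\sum_{k\in\mathcal{K}}g^k(w^k)$. *)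

theory Defs
  imports "HOL-Analysis.Analysis" "HOL-Library.Extended_Real"
begin

text \<open>Arcs form a finite type 'a, nodes a finite type 'v,
  commodities a finite type 'k. Vectors indexed by the
  tolled arc set A1 (i.e. elements of R^n) are represented as vectors in real^'a whose
  entries outside A1 are zero (for w and decompositions) or ignored (for tolls t).\<close>

fun is_walk :: "('a \<Rightarrow> 'v) \<Rightarrow> ('a \<Rightarrow> 'v) \<Rightarrow> 'v \<Rightarrow> 'a list \<Rightarrow> 'v \<Rightarrow> bool" where
  "is_walk src tgt u [] v = (u = v)"
| "is_walk src tgt u (a # as) v = (src a = u \<and> is_walk src tgt (tgt a) as v)"

definition incidence :: "('a::finite \<Rightarrow> 'v::finite) \<Rightarrow> ('a \<Rightarrow> 'v) \<Rightarrow> real ^ 'a ^ 'v" where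
  "incidence src tgt = (\<chi> v a. (if v = src a then 1 else 0) - (if v = tgt a then 1 else 0))"

definition demand :: "'v::finite \<Rightarrow> 'v \<Rightarrow> real ^ 'v" where
  "demand o' d = (\<chi> v. if v = o' then 1 else if v = d then -1 else 0)"

definition flows :: "('a::finite \<Rightarrow> 'v::finite) \<Rightarrow> ('a \<Rightarrow> 'v) \<Rightarrow> 'v \<Rightarrow> 'v \<Rightarrow> (real ^ 'a) set" where
  "flows src tgt o' d = {x. incidence src tgt *v x = demand o' d \<and> (\<forall>a. 0 \<le> x $ a)}"

definition tollsum :: "'a::finite set \<Rightarrow> real ^ 'a \<Rightarrow> real ^ 'a \<Rightarrow> real" where
  "tollsum A1 t x = (\<Sum>a\<in>A1. t $ a * x $ a)"

definition fk :: "('a::finite \<Rightarrow> 'v::finite) \<Rightarrow> ('a \<Rightarrow> 'v) \<Rightarrow> real ^ 'a \<Rightarrow> 'a set \<Rightarrow> 'v \<Rightarrow> 'v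
                   \<Rightarrow> real ^ 'a \<Rightarrow> ereal" where
  "fk src tgt c A1 o' d t =
     (if \<forall>a\<in>A1. 0 \<le> t $ a
      then Inf ((\<lambda>x. ereal (c \<bullet> x + tollsum A1 t x)) ` flows src tgt o' d)
      else -\<infinity>)"

definition ftot :: "('a::finite \<Rightarrow> 'v::finite) \<Rightarrow> ('a \<Rightarrow> 'v) \<Rightarrow> real ^ 'a \<Rightarrow> 'a set \<Rightarrow> ('k::finite \<Rightarrow> 'v)
                   \<Rightarrow> ('k \<Rightarrow> 'v) \<Rightarrow> real ^ 'a \<Rightarrow> ereal" where
  "ftot src tgt c A1 orig dest t = (\<Sum>k\<in>UNIV. fk src tgt c A1 (orig k) (dest k) t)"

definition gk :: "('a::finite \<Rightarrow> 'v::finite) \<Rightarrow> ('a \<Rightarrow> 'v) \<Rightarrow> real ^ 'a \<Rightarrow> 'a set \<Rightarrow> 'v \<Rightarrow> 'v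
                   \<Rightarrow> real ^ 'a \<Rightarrow> ereal" where
  "gk src tgt c A1 o' d w = (SUP t. fk src tgt c A1 o' d t - ereal (tollsum A1 t w))"

definition gtot :: "('a::finite \<Rightarrow> 'v::finite) \<Rightarrow> ('a \<Rightarrow> 'v) \<Rightarrow> real ^ 'a \<Rightarrow> 'a set \<Rightarrow> ('k::finite \<Rightarrow> 'v)
                   \<Rightarrow> ('k \<Rightarrow> 'v) \<Rightarrow> real ^ 'a \<Rightarrow> ereal" where
  "gtot src tgt c A1 orig dest w = (SUP t. ftot src tgt c A1 orig dest t - ereal (tollsum A1 t w))"

definition decomposition :: "'a::finite set \<Rightarrow> real ^ 'a \<Rightarrow> real ^ 'a ^ 'k::finite \<Rightarrow> bool" where
  "decomposition A1 w W \<longleftrightarrow>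
     (\<forall>k. \<forall>a\<in>A1. 0 \<le> W $ k $ a) \<and> (\<forall>k. \<forall>a. a \<notin> A1 \<longrightarrow> W $ k $ a = 0) \<and>
     (\<forall>a\<in>A1. (\<Sum>k\<in>UNIV. W $ k $ a) = w $ a)"

definition bilevel_feasible :: "('a::finite \<Rightarrow> 'v::finite) \<Rightarrow> ('a \<Rightarrow> 'v) \<Rightarrow> real ^ 'a \<Rightarrow> 'a set
      \<Rightarrow> ('k::finite \<Rightarrow> 'v) \<Rightarrow> ('k \<Rightarrow> 'v) \<Rightarrow> real ^ 'a \<Rightarrow> real ^ 'a ^ 'k \<Rightarrow> bool" where
  "bilevel_feasible src tgt c A1 orig dest w W \<longleftrightarrow>
     decomposition A1 w W \<and>
     gtot src tgt c A1 orig dest w = (\<Sum>k\<in>UNIV. gk src tgt c A1 (orig k) (dest k) (W $ k))"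

end

theory Submission
  imports Defs
begin

lemma sum_mult_ereal_nn:
  fixes f :: "'b \<Rightarrow> ereal"
  assumes "0 \<le> u"
  shows "ereal u * sum f A = (\<Sum>k\<in>A. ereal u * f k)"
proof (induct A rule: infinite_finite_induct)
  case (insert x F)
  then show ?case using distrib_left_ereal_nn[OF assms] by (simp add: mult.commute)
qed auto

lemma ereal_minus_real: "(a::ereal) - ereal b = a + ereal (- b)"
  by (cases a) auto

lemma ereal_split_conv:
  assumes "0 < u" "0 < v" "u + v = 1"
  shows "(x::ereal) - ereal (u * a + v * b) = ereal u * (x - ereal a) + ereal v * (x - ereal b)"
  using assms by (cases x) (auto simp: algebra_simps simp flip: distrib_left)

lemma ereal_conv_same:
  assumes "0 < u" "0 < v" "u + v = 1"
  shows "ereal u * (x::ereal) + ereal v * x = x"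
  using assms by (cases x) (auto simp: algebra_simps simp flip: distrib_left)

lemma tollsum_lin:
  "tollsum A1 t (u *\<^sub>R A + v *\<^sub>R B) = u * tollsum A1 t A + v * tollsum A1 t B"
  unfolding tollsum_def by (simp add: sum.distrib sum_distrib_left algebra_simps)

lemma gk_convex:
  assumes "0 < u" "0 < v" "u + v = 1"
  shows "gk src tgt c A1 o' d (u *\<^sub>R A + v *\<^sub>R B)
     \<le> ereal u * gk src tgt c A1 o' d A + ereal v * gk src tgt c A1 o' d B"
  unfolding gk_def
proof (rule SUP_least)
  fix t
  let ?f = "fk src tgt c A1 o' d t"
  have "?f - ereal (tollsum A1 t (u *\<^sub>R A + v *\<^sub>R B))
      = ereal u * (?f - ereal (tollsum A1 t A)) + ereal v * (?f - ereal (tollsum A1 t B))"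
    unfolding tollsum_lin using ereal_split_conv[OF assms] by blast
  also have "\<dots> \<le> ereal u * (SUP t. fk src tgt c A1 o' d t - ereal (tollsum A1 t A))
      + ereal v * (SUP t. fk src tgt c A1 o' d t - ereal (tollsum A1 t B))"
    apply (rule add_mono)
    apply (rule ereal_mult_left_mono, rule SUP_upper, simp, use assms in simp)
    apply (rule ereal_mult_left_mono, rule SUP_upper, simp, use assms in simp)
    done
  finally show "?f - ereal (tollsum A1 t (u *\<^sub>R A + v *\<^sub>R B)) \<le> \<dots>" .
qed

lemma gtot_le:
  assumes "decomposition A1 w W"
  shows "gtot src tgt c A1 orig dest w \<le> (\<Sum>k\<in>UNIV. gk src tgt c A1 (orig k) (dest k) (W $ k))"
  unfolding gtot_def
proof (rule SUP_least)
  fix t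
  have tw: "tollsum A1 t w = (\<Sum>k\<in>UNIV. tollsum A1 t (W $ k))"
  proof -
    have "tollsum A1 t w = (\<Sum>a\<in>A1. t $ a * (\<Sum>k\<in>UNIV. W $ k $ a))"
      unfolding tollsum_def using assms unfolding decomposition_def by simp
    also have "\<dots> = (\<Sum>k\<in>UNIV. tollsum A1 t (W $ k))"
      unfolding tollsum_def by (simp add: sum_distrib_left sum.swap[of _ A1])
    finally show ?thesis .
  qed
  have "ftot src tgt c A1 orig dest t - ereal (tollsum A1 t w)
     = (\<Sum>k\<in>UNIV. fk src tgt c A1 (orig k) (dest k) t - ereal (tollsum A1 t (W $ k)))"
    unfolding ftot_def tw ereal_minus_real
    by (simp add: sum.distrib sum_negf)
  also have "\<dots> \<le> (\<Sum>k\<in>UNIV. gk src tgt c A1 (orig k) (dest k) (W $ k))"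
    apply (rule sum_mono) unfolding gk_def by (rule SUP_upper) simp
  finally show "ftot src tgt c A1 orig dest t - ereal (tollsum A1 t w) \<le> \<dots>" .
qed

theorem lemma6:
  fixes src tgt :: "'a::finite \<Rightarrow> 'v::finite"
    and c :: "real ^ 'a" and A1 :: "'a set"
    and orig dest :: "'k::finite \<Rightarrow> 'v"
    and w :: "real ^ 'a"
  assumes c_nonneg: "\<forall>a. 0 \<le> c $ a"
    and A1_ne: "A1 \<noteq> {}" and A1_proper: "A1 \<noteq> UNIV"
    and od_distinct: "\<forall>k. orig k \<noteq> dest k"
    and toll_free_path: "\<forall>k. \<exists>p. is_walk src tgt (orig k) p (dest k) \<and> (\<forall>a\<in>set p. a \<notin> A1)"
    and w_nonneg: "\<forall>a\<in>A1. 0 \<le> w $ a"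
    and w_outside: "\<forall>a. a \<notin> A1 \<longrightarrow> w $ a = 0"
  shows "convex {W :: real ^ 'a ^ 'k. bilevel_feasible src tgt c A1 orig dest w W}"
  unfolding convex_def
proof (intro ballI allI impI)
  fix W1 W2 :: "real ^ 'a ^ 'k" and u v :: real
  assume W1: "W1 \<in> {W. bilevel_feasible src tgt c A1 orig dest w W}"
    and W2: "W2 \<in> {W. bilevel_feasible src tgt c A1 orig dest w W}"
    and u: "0 \<le> u" and v: "0 \<le> v" and uv: "u + v = 1"
  show "u *\<^sub>R W1 + v *\<^sub>R W2 \<in> {W. bilevel_feasible src tgt c A1 orig dest w W}"
  proof (cases "u = 0 \<or> v = 0")
    case True
    then show ?thesis using W1 W2 uv by auto
  next
    case False
    then have up: "0 < u" and vp: "0 < v" using u v by auto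
    let ?W = "u *\<^sub>R W1 + v *\<^sub>R W2"
    let ?G = "gtot src tgt c A1 orig dest w"
    let ?g = "\<lambda>k X. gk src tgt c A1 (orig k) (dest k) X"
    have d1: "decomposition A1 w W1" and e1: "?G = (\<Sum>k\<in>UNIV. ?g k (W1 $ k))"
      using W1 unfolding bilevel_feasible_def by auto
    have d2: "decomposition A1 w W2" and e2: "?G = (\<Sum>k\<in>UNIV. ?g k (W2 $ k))"
      using W2 unfolding bilevel_feasible_def by auto
    have d: "decomposition A1 w ?W"
    proof -
      have "\<forall>a\<in>A1. (\<Sum>k\<in>UNIV. ?W $ k $ a) = w $ a"
      proof
        fix a assume a: "a \<in> A1"
        have "(\<Sum>k\<in>UNIV. ?W $ k $ a) = u * (\<Sum>k\<in>UNIV. W1 $ k $ a) + v * (\<Sum>k\<in>UNIV. W2 $ k $ a)"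
          by (simp add: sum.distrib sum_distrib_left)
        also have "\<dots> = w $ a" using d1 d2 a uv unfolding decomposition_def
          by (simp add: algebra_simps) (metis distrib_right mult_1)
        finally show "(\<Sum>k\<in>UNIV. ?W $ k $ a) = w $ a" .
      qed
      then show ?thesis using d1 d2 u v unfolding decomposition_def by auto
    qed
    have "(\<Sum>k\<in>UNIV. ?g k (?W $ k))
        \<le> (\<Sum>k\<in>UNIV. ereal u * ?g k (W1 $ k) + ereal v * ?g k (W2 $ k))"
      apply (rule sum_mono) using gk_convex[OF up vp uv] by simp
    also have "\<dots> = ereal u * ?G + ereal v * ?G"
      unfolding sum.distrib e1 e2 sum_mult_ereal_nn[OF u] sum_mult_ereal_nn[OF v]
      using e1 e2 by (simp add: sum_mult_ereal_nn[OF u, symmetric] sum_mult_ereal_nn[OF v, symmetric])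
    also have "\<dots> = ?G" by (rule ereal_conv_same[OF up vp uv])
    finally have "(\<Sum>k\<in>UNIV. ?g k (?W $ k)) \<le> ?G" .
    moreover have "?G \<le> (\<Sum>k\<in>UNIV. ?g k (?W $ k))" by (rule gtot_le[OF d])
    ultimately show ?thesis using d unfolding bilevel_feasible_def by auto
  qed
qed

end
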